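(* Let $X$ be a connected, non-bipartite strongly regular graph with parameters $(n,k,a,c)$, $k\ge3$, $k>c\ge1$, whose adjacency matrix has the integer eigenvalue $e=\lambda_1$, the larger root of $\lambda^2-(a-c)\lambda-(k-c)=0$. Suppose $c=e(e+1)$ and $e>a$. Then for every vertex $v$ of $X$, the closed neighbourhood $N=\{v\}\cup X_1(v)$ (the subgraph induced by $v$ together with its neighbours) is a star complement for $e$ in $X$.
   Context: A strongly regular graph with parameters $(n,k,a,c)$ has $n$ vertices, degree $k$, every two adjacent vertices have $a$ common neighbours and every two distinct non-adjacent vertices have $c$ common neighbours. If $e$ is an eigenvalue of $X$ with multiplicity $m$, a star complement for $e$ in $X$ is an induced subgraph on $n-m$ vertices that does not have $e$ as an eigenvalue. $X_1(v)$ denotes the set of neighbours of $v$. *)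

theory Defs
  imports "Jordan_Normal_Form.Char_Poly"
begin

definition simple_graph :: "'a set \<Rightarrow> ('a \<Rightarrow> 'a \<Rightarrow> bool) \<Rightarrow> bool" where
  "simple_graph V E \<longleftrightarrow> finite V \<and> (\<forall>u v. E u v \<longrightarrow> u \<in> V \<and> v \<in> V)
     \<and> (\<forall>u v. E u v \<longrightarrow> E v u) \<and> (\<forall>u. \<not> E u u)"

definition nbrs :: "('a \<Rightarrow> 'a \<Rightarrow> bool) \<Rightarrow> 'a \<Rightarrow> 'a set" where
  "nbrs E v = {u. E v u}"

definition graph_connected :: "'a set \<Rightarrow> ('a \<Rightarrow> 'a \<Rightarrow> bool) \<Rightarrow> bool" where
  "graph_connected V E \<longleftrightarrow> (\<forall>u\<in>V. \<forall>v\<in>V. E\<^sup>*\<^sup>* u v)"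

definition bipartite :: "'a set \<Rightarrow> ('a \<Rightarrow> 'a \<Rightarrow> bool) \<Rightarrow> bool" where
  "bipartite V E \<longleftrightarrow> (\<exists>A. A \<subseteq> V \<and> (\<forall>u v. E u v \<longrightarrow> (u \<in> A \<longleftrightarrow> v \<notin> A)))"

definition strongly_regular ::
  "'a set \<Rightarrow> ('a \<Rightarrow> 'a \<Rightarrow> bool) \<Rightarrow> nat \<Rightarrow> nat \<Rightarrow> nat \<Rightarrow> nat \<Rightarrow> bool" where
  "strongly_regular V E n k a c \<longleftrightarrow> simple_graph V E \<and> card V = n
     \<and> (\<forall>v\<in>V. card (nbrs E v) = k)
     \<and> (\<forall>u\<in>V. \<forall>v\<in>V. E u v \<longrightarrow> card (nbrs E u \<inter> nbrs E v) = a)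
     \<and> (\<forall>u\<in>V. \<forall>v\<in>V. u \<noteq> v \<and> \<not> E u v \<longrightarrow> card (nbrs E u \<inter> nbrs E v) = c)"

text \<open>Adjacency matrix of the subgraph induced on S, w.r.t. some enumeration of S
  (eigenvalues and characteristic polynomial do not depend on the enumeration).\<close>
definition adj_mat :: "('a \<Rightarrow> 'a \<Rightarrow> bool) \<Rightarrow> 'a set \<Rightarrow> real mat" where
  "adj_mat E S = (let xs = (SOME xs. distinct xs \<and> set xs = S) in
     mat (length xs) (length xs) (\<lambda>(i,j). if E (xs ! i) (xs ! j) then 1 else 0))"

definition eig_mult :: "real mat \<Rightarrow> real \<Rightarrow> nat" where
  "eig_mult A e = order e (char_poly A)"

definition star_complement :: "'a set \<Rightarrow> ('a \<Rightarrow> 'a \<Rightarrow> bool) \<Rightarrow> real \<Rightarrow> 'a set \<Rightarrow> bool" where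
  "star_complement V E e S \<longleftrightarrow> S \<subseteq> V
     \<and> card S = card V - eig_mult (adj_mat E V) e
     \<and> \<not> eigenvalue (adj_mat E S) e"

end

theory Submission imports Defs "Jordan_Normal_Form.Jordan_Normal_Form_Existence" begin

lemma enum_exists:
  assumes "finite S"
  shows "distinct (SOME xs. distinct xs \<and> set xs = S) \<and> set (SOME xs. distinct xs \<and> set xs = S) = S"
proof -
  obtain xs where "set xs = S" "distinct xs" using finite_distinct_list[OF assms] by blast
  then have "\<exists>xs. distinct xs \<and> set xs = S" by blast
  from someI_ex[OF this] show ?thesis .
qed

lemma adj_mat_obtain:
  assumes "finite S"
  obtains xs where "distinct xs" "set xs = S" "length xs = card S"
    "adj_mat E S = mat (card S) (card S) (\<lambda>(i,j). if E (xs!i) (xs!j) then 1 else 0)"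
proof -
  define xs where "xs = (SOME xs. distinct xs \<and> set xs = S)"
  have d: "distinct xs" "set xs = S" using enum_exists[OF assms] unfolding xs_def by auto
  then have l: "length xs = card S" using distinct_card by fastforce
  show ?thesis
    apply (rule that[OF d l])
    unfolding adj_mat_def Let_def xs_def[symmetric] l by simp
qed

lemma sum_nth_conv: assumes "distinct xs"
  shows "(\<Sum>j = 0..<length xs. h (xs!j)) = (\<Sum>u\<in>set xs. h u)"
  using sum.reindex_bij_betw[OF bij_betw_nth[OF assms refl refl], of h]
  by (simp add: atLeast0LessThan)

lemma srg_facts:
  assumes "strongly_regular V E n k a c"
  shows "finite V" "card V = n" "\<And>u v. E u v \<Longrightarrow> u \<in> V" "\<And>u v. E u v \<Longrightarrow> v \<in> V"
    "\<And>u v. E u v \<Longrightarrow> E v u" "\<And>u. \<not> E u u"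
    "\<And>v. v \<in> V \<Longrightarrow> card (nbrs E v) = k"
    "\<And>u v. u \<in> V \<Longrightarrow> v \<in> V \<Longrightarrow> E u v \<Longrightarrow> card (nbrs E u \<inter> nbrs E v) = a"
    "\<And>u v. u \<in> V \<Longrightarrow> v \<in> V \<Longrightarrow> u \<noteq> v \<Longrightarrow> \<not> E u v \<Longrightarrow> card (nbrs E u \<inter> nbrs E v) = c"
  using assms unfolding strongly_regular_def simple_graph_def by blast+

lemma nbrs_sub: assumes "strongly_regular V E n k a c" shows "nbrs E v \<subseteq> V"
  using srg_facts(4)[OF assms] unfolding nbrs_def by blast

lemma nbhd_not_eig:
  fixes e :: real
  assumes srg: "strongly_regular V E n k a c" and v: "v \<in> V"
   and ea: "e > real a" and ek: "e*e - real a * e - real k \<noteq> 0" and k0: "k > 0"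
  shows "\<not> eigenvalue (adj_mat E (insert v (nbrs E v))) e"
proof
  note F = srg_facts[OF srg]
  define N where "N = nbrs E v"
  define S where "S = insert v N"
  have NV: "N \<subseteq> V" unfolding N_def by (rule nbrs_sub[OF srg])
  have finN: "finite N" using NV F(1) finite_subset by blast
  have finS: "finite S" unfolding S_def using finN by simp
  have vN: "v \<notin> N" unfolding N_def nbrs_def using F(6) by blast
  have cardN: "card N = k" unfolding N_def using F(7)[OF v] .
  have EvN: "\<And>w. w \<in> N \<longleftrightarrow> E v w" unfolding N_def nbrs_def by simp
  assume "eigenvalue (adj_mat E (insert v (nbrs E v))) e"
  then have eig: "eigenvalue (adj_mat E S) e" unfolding S_def N_def .
  obtain ys where ys: "distinct ys" "set ys = S" "length ys = card S"
    and B: "adj_mat E S = mat (card S) (card S) (\<lambda>(i,j). if E (ys!i) (ys!j) then 1 else 0)"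
    using adj_mat_obtain[OF finS] by blast
  define m where "m = card S"
  obtain x where x: "x \<in> carrier_vec m" "x \<noteq> 0\<^sub>v m" "adj_mat E S *\<^sub>v x = e \<cdot>\<^sub>v x"
    using eig unfolding eigenvalue_def eigenvector_def B m_def by auto
  define g where "g u = x $ (inv_into {..<m} ((!) ys) u)" for u
  have inj: "inj_on ((!) ys) {..<m}" using inj_on_nth[OF ys(1)] ys(3) m_def by auto
  have gys: "\<And>j. j < m \<Longrightarrow> g (ys!j) = x $ j"
    unfolding g_def using inv_into_f_f[OF inj] by simp
  have eq: "e * g u = (\<Sum>w\<in>S. if E u w then g w else 0)" if u: "u \<in> S" for u
  proof -
    obtain i where i: "i < m" "u = ys ! i" using u ys unfolding m_def by (metis in_set_conv_nth)
    have "(adj_mat E S *\<^sub>v x) $ i = e * x $ i" using x(3) x(1) i(1) by (metis index_smult_vec(1) carrier_vecD)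
    moreover have "(adj_mat E S *\<^sub>v x) $ i = (\<Sum>j = 0..<m. (if E (ys!i) (ys!j) then 1 else 0) * x $ j)"
      unfolding B m_def[symmetric] using i(1) x(1) by (simp add: mult_mat_vec_def scalar_prod_def row_def)
    moreover have "\<dots> = (\<Sum>j = 0..<length ys. (\<lambda>w. if E u w then g w else 0) (ys ! j))"
      using gys i ys(3) m_def by (intro sum.cong) auto
    moreover have "\<dots> = (\<Sum>w\<in>S. if E u w then g w else 0)" using sum_nth_conv[OF ys(1)] ys(2) by simp
    ultimately show ?thesis using gys[OF i(1)] i(2) by simp
  qed
  have nz: "\<exists>u\<in>S. g u \<noteq> 0"
  proof (rule ccontr)
    assume "\<not> ?thesis"
    then have "\<And>j. j < m \<Longrightarrow> x $ j = 0" using gys ys m_def by (metis nth_mem)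
    then have "x = 0\<^sub>v m" using x(1) by (intro eq_vecI) auto
    with x(2) show False by simp
  qed
  define T where "T = (\<Sum>w\<in>N. g w)"
  have eqv: "e * g v = T"
  proof -
    have "e * g v = (\<Sum>w\<in>S. if E v w then g w else 0)" using eq S_def by simp
    also have "\<dots> = (\<Sum>w\<in>N. if E v w then g w else 0)" unfolding S_def using vN finN F(6) by simp
    also have "\<dots> = T" unfolding T_def using EvN by (intro sum.cong) auto
    finally show ?thesis .
  qed
  have equ: "e * g u = g v + (\<Sum>w\<in>N. if E u w then g w else 0)" if u: "u \<in> N" for u
  proof -
    have "E u v" using F(5) EvN u by blast
    have "e * g u = (\<Sum>w\<in>S. if E u w then g w else 0)" using eq S_def u by simp
    also have "\<dots> = g v + (\<Sum>w\<in>N. if E u w then g w else 0)" unfolding S_def using vN finN \<open>E u v\<close> by simp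
    finally show ?thesis .
  qed
  have inner: "(\<Sum>u\<in>N. if E u w then (1::real) else 0) = real a" if w: "w \<in> N" for w
  proof -
    have "(\<Sum>u\<in>N. if E u w then (1::real) else 0) = real (card {u\<in>N. E u w})"
    proof -
      have "N \<inter> {u. E u w} = {u\<in>N. E u w}" by blast
      then show ?thesis using finN by (simp add: sum.If_cases)
    qed
    also have "{u\<in>N. E u w} = nbrs E v \<inter> nbrs E w" unfolding N_def nbrs_def using F(5) by blast
    also have "card \<dots> = a" using F(8)[OF v _ ] w EvN NV by blast
    finally show ?thesis .
  qed
  have "e * T = (\<Sum>u\<in>N. e * g u)" unfolding T_def by (simp add: sum_distrib_left)
  also have "\<dots> = (\<Sum>u\<in>N. g v + (\<Sum>w\<in>N. if E u w then g w else 0))" using equ by (intro sum.cong) auto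
  also have "\<dots> = real k * g v + (\<Sum>u\<in>N. \<Sum>w\<in>N. if E u w then g w else 0)"
    by (simp add: sum.distrib cardN)
  also have "(\<Sum>u\<in>N. \<Sum>w\<in>N. if E u w then g w else 0) = (\<Sum>w\<in>N. \<Sum>u\<in>N. (if E u w then 1 else 0) * g w)"
    by (subst sum.swap) (intro sum.cong, auto)
  also have "\<dots> = (\<Sum>w\<in>N. (\<Sum>u\<in>N. if E u w then 1 else 0) * g w)" by (simp add: sum_distrib_right)
  also have "\<dots> = (\<Sum>w\<in>N. real a * g w)" using inner by (intro sum.cong) auto
  also have "\<dots> = real a * T" unfolding T_def by (simp add: sum_distrib_left)
  finally have "e * T = real k * g v + real a * T" .
  with eqv have "(e*e - real a * e - real k) * g v = 0" by (simp add: algebra_simps)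
  with ek have gv: "g v = 0" by simp
  have equ': "e * g u = (\<Sum>w\<in>N. if E u w then g w else 0)" if "u \<in> N" for u using equ[OF that] gv by simp
  have Nne: "N \<noteq> {}" using cardN k0 by auto
  define M where "M = Max ((\<lambda>u. \<bar>g u\<bar>) ` N)"
  have Mge: "\<And>w. w \<in> N \<Longrightarrow> \<bar>g w\<bar> \<le> M" unfolding M_def using finN by auto
  obtain u0 where u0: "u0 \<in> N" "\<bar>g u0\<bar> = M" unfolding M_def using finN Nne
    by (metis (no_types, lifting) Max_in finite_imageI image_iff image_is_empty)
  have "e * M = \<bar>e * g u0\<bar>" using u0 ea by (simp add: abs_mult)
  also have "\<dots> = \<bar>\<Sum>w\<in>N. if E u0 w then g w else 0\<bar>" using equ'[OF u0(1)] by simp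
  also have "\<dots> \<le> (\<Sum>w\<in>N. \<bar>if E u0 w then g w else 0\<bar>)" by (rule sum_abs)
  also have "\<dots> \<le> (\<Sum>w\<in>N. if E u0 w then M else 0)" using Mge by (intro sum_mono) auto
  also have "\<dots> = (\<Sum>w\<in>N. (if E w u0 then 1 else 0) * M)" using F(5) by (intro sum.cong) auto
  also have "\<dots> = real a * M" using inner[OF u0(1)] by (simp add: sum_distrib_right[symmetric])
  finally have "(e - real a) * M \<le> 0" by (simp add: algebra_simps)
  moreover have "M \<ge> 0" using u0 by auto
  ultimately have "M = 0" using ea by (smt (verit) mult_pos_pos)
  then have "\<And>w. w \<in> N \<Longrightarrow> g w = 0" using Mge by fastforce
  with gv nz show False unfolding S_def by auto
qed

lemma card_inter_sum:
  assumes srg: "strongly_regular V E n k a c" and x: "x \<in> V" and y: "y \<in> V"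
  shows "(\<Sum>u\<in>V. (if E x u then 1 else 0) * (if E u y then 1 else 0) :: real) = real (card (nbrs E x \<inter> nbrs E y))"
proof -
  note F = srg_facts[OF srg]
  have "(\<Sum>u\<in>V. (if E x u then 1 else 0) * (if E u y then 1 else 0) :: real)
      = (\<Sum>u\<in>V. if u \<in> nbrs E x \<inter> nbrs E y then 1 else 0)"
    using F(5) unfolding nbrs_def by (intro sum.cong) auto
  also have "\<dots> = real (card (V \<inter> (nbrs E x \<inter> nbrs E y)))"
    using F(1) sum.If_cases[of V "\<lambda>u. u \<in> nbrs E x \<inter> nbrs E y" "\<lambda>_. 1::real" "\<lambda>_. 0"]
    by (simp add: Int_def)
  also have "V \<inter> (nbrs E x \<inter> nbrs E y) = nbrs E x \<inter> nbrs E y" using nbrs_sub[OF srg] by blast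
  finally show ?thesis .
qed

lemma srg_matrix:
  assumes srg: "strongly_regular V E n k a c"
  defines "A \<equiv> adj_mat E V"
  shows "A \<in> carrier_mat n n" "\<And>i. i < n \<Longrightarrow> A $$ (i,i) = 0"
   "\<And>i. i < n \<Longrightarrow> (\<Sum>j = 0..<n. A $$ (i,j)) = real k"
   "\<And>j. j < n \<Longrightarrow> (\<Sum>i = 0..<n. A $$ (i,j)) = real k"
   "\<And>i j. i < n \<Longrightarrow> j < n \<Longrightarrow> (\<Sum>l = 0..<n. A $$ (i,l) * A $$ (l,j))
        = (real a - real c) * A $$ (i,j) + (if i = j then real k - real c else 0) + real c"
proof -
  note F = srg_facts[OF srg]
  obtain xs where xs: "distinct xs" "set xs = V" "length xs = card V"
    and Ad: "adj_mat E V = mat (card V) (card V) (\<lambda>(i,j). if E (xs!i) (xs!j) then 1 else 0)"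
    using adj_mat_obtain[OF F(1)] by blast
  have nV: "card V = n" using F(2) .
  have ent: "\<And>i j. i < n \<Longrightarrow> j < n \<Longrightarrow> A $$ (i,j) = (if E (xs!i) (xs!j) then 1 else 0)"
    unfolding A_def Ad nV by simp
  have xsV: "\<And>i. i < n \<Longrightarrow> xs ! i \<in> V" using xs nV by auto
  show "A \<in> carrier_mat n n" unfolding A_def Ad nV by simp
  show "\<And>i. i < n \<Longrightarrow> A $$ (i,i) = 0" using ent F(6) by simp
  have conv: "\<And>h. (\<Sum>j = 0..<n. h (xs ! j)) = (\<Sum>u\<in>V. h u)"
    using sum_nth_conv[OF xs(1)] xs nV by metis
  have deg: "(\<Sum>u\<in>V. if E x u then 1 else 0) = real k" if "x \<in> V" for x
  proof -
    have "(\<Sum>u\<in>V. if E x u then 1 else 0) = real (card (V \<inter> nbrs E x))"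
      using F(1) by (simp add: sum.If_cases nbrs_def Int_def)
    also have "V \<inter> nbrs E x = nbrs E x" using nbrs_sub[OF srg] by blast
    finally show ?thesis using F(7)[OF that] by simp
  qed
  show "\<And>i. i < n \<Longrightarrow> (\<Sum>j = 0..<n. A $$ (i,j)) = real k"
  proof -
    fix i assume i: "i < n"
    have "(\<Sum>j = 0..<n. A $$ (i,j)) = (\<Sum>j = 0..<n. (\<lambda>u. if E (xs!i) u then 1 else 0) (xs ! j))"
      using ent i by (intro sum.cong) auto
    also have "\<dots> = real k" using conv[of "\<lambda>u. if E (xs!i) u then 1 else 0"] deg[OF xsV[OF i]] by (rule trans)
    finally show "(\<Sum>j = 0..<n. A $$ (i,j)) = real k" .
  qed
  show "\<And>j. j < n \<Longrightarrow> (\<Sum>i = 0..<n. A $$ (i,j)) = real k"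
  proof -
    fix j assume j: "j < n"
    have "(\<Sum>i = 0..<n. A $$ (i,j)) = (\<Sum>i = 0..<n. (\<lambda>u. if E (xs!j) u then 1 else 0) (xs ! i))"
      using ent j F(5) by (intro sum.cong) auto
    also have "\<dots> = real k" using conv[of "\<lambda>u. if E (xs!j) u then 1 else 0"] deg[OF xsV[OF j]] by (rule trans)
    finally show "(\<Sum>i = 0..<n. A $$ (i,j)) = real k" .
  qed
  show "\<And>i j. i < n \<Longrightarrow> j < n \<Longrightarrow> (\<Sum>l = 0..<n. A $$ (i,l) * A $$ (l,j))
        = (real a - real c) * A $$ (i,j) + (if i = j then real k - real c else 0) + real c"
  proof -
    fix i j assume i: "i < n" and j: "j < n"
    have "(\<Sum>l = 0..<n. A $$ (i,l) * A $$ (l,j))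
       = (\<Sum>l = 0..<n. (\<lambda>u. (if E (xs!i) u then 1 else 0) * (if E u (xs!j) then 1 else 0)) (xs ! l))"
      using ent i j by (intro sum.cong) auto
    also have "\<dots> = real (card (nbrs E (xs!i) \<inter> nbrs E (xs!j)))"
      using conv[of "\<lambda>u. (if E (xs!i) u then 1 else 0) * (if E u (xs!j) then 1 else 0)"]
        card_inter_sum[OF srg xsV[OF i] xsV[OF j]] by (rule trans)
    also have "\<dots> = (real a - real c) * A $$ (i,j) + (if i = j then real k - real c else 0) + real c"
    proof (cases "i = j")
      case True
      then show ?thesis using F(7)[OF xsV[OF i]] ent i F(6) by simp
    next
      case False
      then have ne: "xs!i \<noteq> xs!j" using xs(1) xs(3) nV i j nth_eq_iff_index_eq by metis
      show ?thesis
      proof (cases "E (xs!i) (xs!j)")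
        case True
        then show ?thesis using F(8)[OF xsV[OF i] xsV[OF j]] ent i j False by simp
      next
        case False
        then show ?thesis using F(9)[OF xsV[OF i] xsV[OF j] ne] ent i j \<open>i \<noteq> j\<close> by simp
      qed
    qed
    finally show "(\<Sum>l = 0..<n. A $$ (i,l) * A $$ (l,j))
        = (real a - real c) * A $$ (i,j) + (if i = j then real k - real c else 0) + real c" .
  qed
qed


lemma eig_roots:
  fixes A :: "real mat" and d :: complex and k p q cc :: real
  assumes A: "A \<in> carrier_mat n n"
  and cs: "\<And>j. j < n \<Longrightarrow> (\<Sum>i = 0..<n. A $$ (i,j)) = k"
  and sq: "\<And>i j. i < n \<Longrightarrow> j < n \<Longrightarrow> (\<Sum>l = 0..<n. A $$ (i,l) * A $$ (l,j))
        = p * A $$ (i,j) + (if i = j then q else 0) + cc"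
  and ev: "eigenvalue (map_mat complex_of_real A) d"
  shows "d = of_real k \<or> d*d - of_real p * d - of_real q = 0"
proof -
  define C where "C = map_mat complex_of_real A"
  have C: "C \<in> carrier_mat n n" using A unfolding C_def by simp
  have Ce: "\<And>i j. i < n \<Longrightarrow> j < n \<Longrightarrow> C $$ (i,j) = of_real (A $$ (i,j))" unfolding C_def using A by auto
  obtain v where v: "v \<in> carrier_vec n" "v \<noteq> 0\<^sub>v n" "C *\<^sub>v v = d \<cdot>\<^sub>v v"
    using ev C unfolding eigenvalue_def eigenvector_def C_def[symmetric] by auto
  have eqi: "(\<Sum>j = 0..<n. C $$ (i,j) * v $ j) = d * v $ i" if i: "i < n" for i
  proof -
    have "(C *\<^sub>v v) $ i = d * v $ i" using v(3) v(1) i by (metis index_smult_vec(1) carrier_vecD)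
    moreover have "(C *\<^sub>v v) $ i = (\<Sum>j = 0..<n. C $$ (i,j) * v $ j)"
      using C v(1) i by (simp add: mult_mat_vec_def scalar_prod_def row_def)
    ultimately show ?thesis by simp
  qed
  define S where "S = (\<Sum>j = 0..<n. v $ j)"
  have dS: "d * S = of_real k * S"
  proof -
    have "d * S = (\<Sum>i = 0..<n. d * v $ i)" unfolding S_def by (simp add: sum_distrib_left)
    also have "\<dots> = (\<Sum>i = 0..<n. \<Sum>j = 0..<n. C $$ (i,j) * v $ j)" using eqi by simp
    also have "\<dots> = (\<Sum>j = 0..<n. (\<Sum>i = 0..<n. C $$ (i,j)) * v $ j)"
      by (subst sum.swap) (simp add: sum_distrib_right)
    also have "\<dots> = (\<Sum>j = 0..<n. of_real k * v $ j)"
    proof (intro sum.cong refl)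
      fix j assume j: "j \<in> {0..<n}"
      have "(\<Sum>i = 0..<n. C $$ (i,j)) = (\<Sum>i = 0..<n. of_real (A $$ (i,j)))" using Ce j by simp
      also have "\<dots> = of_real (\<Sum>i = 0..<n. A $$ (i,j))" by (rule of_real_sum[symmetric])
      also have "\<dots> = of_real k" using cs j by simp
      finally show "(\<Sum>i = 0..<n. C $$ (i,j)) * v $ j = of_real k * v $ j" using cs j by simp
    qed
    also have "\<dots> = of_real k * S" unfolding S_def by (simp add: sum_distrib_left)
    finally show ?thesis .
  qed
  have sqi: "d * d * v $ i = of_real p * d * v $ i + of_real q * v $ i + of_real cc * S" if i: "i < n" for i
  proof -
    have "d * d * v $ i = d * (\<Sum>j = 0..<n. C $$ (i,j) * v $ j)" using eqi[OF i] by simp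
    also have "\<dots> = (\<Sum>j = 0..<n. C $$ (i,j) * (d * v $ j))" by (simp add: sum_distrib_left algebra_simps)
    also have "\<dots> = (\<Sum>j = 0..<n. C $$ (i,j) * (\<Sum>l = 0..<n. C $$ (j,l) * v $ l))" using eqi by simp
    also have "\<dots> = (\<Sum>l = 0..<n. (\<Sum>j = 0..<n. C $$ (i,j) * C $$ (j,l)) * v $ l)"
      by (simp add: sum_distrib_left sum_distrib_right algebra_simps) (rule sum.swap)
    also have "\<dots> = (\<Sum>l = 0..<n. (of_real p * C $$ (i,l) + (if i = l then of_real q else 0) + of_real cc) * v $ l)"
    proof (intro sum.cong refl)
      fix l assume l: "l \<in> {0..<n}"
      have "(\<Sum>j = 0..<n. C $$ (i,j) * C $$ (j,l)) = of_real (\<Sum>j = 0..<n. A $$ (i,j) * A $$ (j,l))"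
        using Ce i l by simp
      also have "\<dots> = of_real p * C $$ (i,l) + (if i = l then of_real q else 0) + of_real cc"
        using sq[OF i] l Ce i by simp
      finally show "(\<Sum>j = 0..<n. C $$ (i,j) * C $$ (j,l)) * v $ l =
           (of_real p * C $$ (i,l) + (if i = l then of_real q else 0) + of_real cc) * v $ l" by simp
    qed
    also have "\<dots> = of_real p * (\<Sum>l = 0..<n. C $$ (i,l) * v $ l) + (\<Sum>l = 0..<n. (if i = l then of_real q else 0) * v $ l)
        + of_real cc * S"
      unfolding S_def by (simp add: algebra_simps sum.distrib sum_distrib_left)
    also have "(\<Sum>l = 0..<n. (if i = l then of_real q else 0) * v $ l) = of_real q * v $ i"
      using i by (simp add: if_distrib[of "\<lambda>x. x * _"] cong: if_cong)
    finally show ?thesis using eqi[OF i] by (simp add: algebra_simps)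
  qed
  show ?thesis
  proof (cases "S = 0")
    case False
    then show ?thesis using dS by simp
  next
    case True
    obtain i where i: "i < n" "v $ i \<noteq> 0"
    proof (rule ccontr)
      assume "\<not> thesis"
      then have "\<And>i. i < n \<Longrightarrow> v $ i = 0" using that by blast
      then have "v = 0\<^sub>v n" using v(1) by (intro eq_vecI) auto
      with v(2) show False by simp
    qed
    from sqi[OF i(1)] True have "(d*d - of_real p * d - of_real q) * v $ i = 0" by (simp add: algebra_simps)
    with i(2) show ?thesis by simp
  qed
qed


definition mtr :: "'a::comm_ring_1 mat \<Rightarrow> 'a" where
  "mtr M = (\<Sum>i = 0..<dim_row M. M $$ (i,i))"

lemma mtr_comm:
  assumes M: "M \<in> carrier_mat n m" and N: "N \<in> carrier_mat m n"
  shows "mtr (M * N) = mtr (N * M)"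
proof -
  have "mtr (M * N) = (\<Sum>i = 0..<n. \<Sum>l = 0..<m. M $$ (i,l) * N $$ (l,i))"
    unfolding mtr_def using M N by (simp add: scalar_prod_def)
  also have "\<dots> = (\<Sum>l = 0..<m. \<Sum>i = 0..<n. N $$ (l,i) * M $$ (i,l))"
    by (subst sum.swap) (simp add: mult.commute)
  also have "\<dots> = mtr (N * M)"
    unfolding mtr_def using M N by (simp add: scalar_prod_def)
  finally show ?thesis .
qed

lemma mtr_sim:
  assumes P: "P \<in> carrier_mat n n" and Q: "Q \<in> carrier_mat n n" and X: "X \<in> carrier_mat n n"
    and QP: "Q * P = 1\<^sub>m n"
  shows "mtr (P * X * Q) = mtr X"
proof -
  have "mtr (P * X * Q) = mtr (Q * (P * X))" using P X Q by (intro mtr_comm) auto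
  also have "Q * (P * X) = (Q * P) * X" using P X Q by (simp add: assoc_mult_mat)
  also have "\<dots> = X" using QP X by simp
  finally show ?thesis .
qed

lemma triang:
  fixes A :: "complex mat"
  assumes A: "A \<in> carrier_mat n n"
  obtains J P Q where "similar_mat_wit A J P Q" "upper_triangular J" "J \<in> carrier_mat n n"
proof -
  obtain as where "char_poly A = (\<Prod>a\<leftarrow>as. [:- a, 1:])" using char_poly_factorized[OF A] by blast
  from jordan_nf_exists[OF A this] obtain n_as where "jordan_nf A n_as" by blast
  then obtain P Q where w: "similar_mat_wit A (jordan_matrix n_as) P Q"
    unfolding jordan_nf_def similar_mat_def by blast
  have Jc: "jordan_matrix n_as \<in> carrier_mat n n" using w A unfolding similar_mat_wit_def Let_def by auto
  have "upper_triangular (jordan_matrix n_as)"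
    by (rule upper_triangularI, rule jordan_matrix_upper_triangular) auto
  with w Jc show ?thesis using that by blast
qed

lemma upper_sq_diag:
  assumes J: "J \<in> carrier_mat n n" and ut: "upper_triangular J" and i: "i < n"
  shows "(J * J) $$ (i,i) = J $$ (i,i) * J $$ (i,i)"
proof -
  have "(J * J) $$ (i,i) = (\<Sum>l = 0..<n. J $$ (i,l) * J $$ (l,i))"
    using J i by (simp add: scalar_prod_def)
  also have "\<dots> = (\<Sum>l = 0..<n. if l = i then J $$ (i,i) * J $$ (i,i) else 0)"
  proof (intro sum.cong refl)
    fix l assume l: "l \<in> {0..<n}"
    show "J $$ (i,l) * J $$ (l,i) = (if l = i then J $$ (i,i) * J $$ (i,i) else 0)"
    proof (cases "l < i")
      case True then show ?thesis using upper_triangularD[OF ut True] i J by auto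
    next
      case False
      show ?thesis
      proof (cases "l = i")
        case False
        with \<open>\<not> l < i\<close> have "i < l" by simp
        then show ?thesis using upper_triangularD[OF ut \<open>i < l\<close>] l J False by auto
      qed simp
    qed
  qed
  also have "\<dots> = J $$ (i,i) * J $$ (i,i)" using i by simp
  finally show ?thesis .
qed

lemma triang_facts:
  fixes A :: "complex mat"
  assumes A: "A \<in> carrier_mat n n"
  obtains D where "mtr A = (\<Sum>i = 0..<n. D i)" "mtr (A * A) = (\<Sum>i = 0..<n. D i * D i)"
    "char_poly A = (\<Prod>i = 0..<n. [:- D i, 1:])"
proof -
  obtain J P Q where w: "similar_mat_wit A J P Q" and ut: "upper_triangular J" and J: "J \<in> carrier_mat n n"
    using triang[OF A] by blast
  have P: "P \<in> carrier_mat n n" and Q: "Q \<in> carrier_mat n n" and QP: "Q * P = 1\<^sub>m n" and AJ: "A = P * J * Q"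
    using w A unfolding similar_mat_wit_def Let_def by auto
  define D where "D i = J $$ (i,i)" for i
  have 1: "mtr A = (\<Sum>i = 0..<n. D i)" unfolding AJ mtr_sim[OF P Q J QP] unfolding mtr_def D_def using J by simp
  have "A ^\<^sub>m 2 = P * J ^\<^sub>m 2 * Q" by (rule similar_mat_wit_pow_id[OF w])
  moreover have "A ^\<^sub>m 2 = A * A" using A by (simp add: numeral_2_eq_2)
  moreover have "J ^\<^sub>m 2 = J * J" using J by (simp add: numeral_2_eq_2)
  ultimately have AA: "A * A = P * (J * J) * Q" by simp
  have 2: "mtr (A * A) = (\<Sum>i = 0..<n. D i * D i)"
    unfolding AA mtr_sim[OF P Q mult_carrier_mat[OF J J] QP] unfolding mtr_def D_def
    using J upper_sq_diag[OF J ut] by simp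
  have "char_poly A = char_poly J" using w char_poly_similar unfolding similar_mat_def by blast
  also have "\<dots> = (\<Prod>a\<leftarrow>diag_mat J. [:- a, 1:])" by (rule char_poly_upper_triangular[OF J ut])
  also have "\<dots> = (\<Prod>i = 0..<n. [:- D i, 1:])"
    unfolding diag_mat_def D_def using J
    by (simp add: prod.distinct_set_conv_list[symmetric, of "[0..<n]"] comp_def)
  finally show ?thesis using that 1 2 by blast
qed


lemma count3:
  fixes D :: "nat \<Rightarrow> 'b" and I :: "nat set"
  assumes fin: "finite I" and D: "\<And>i. i \<in> I \<Longrightarrow> D i = x \<or> D i = y \<or> D i = z"
    and xy: "x \<noteq> y" and xz: "x \<noteq> z" and yz: "y \<noteq> z"
  shows "(\<Sum>i\<in>I. h (D i)) = of_nat (card {i\<in>I. D i = x}) * h x + of_nat (card {i\<in>I. D i = y}) * h y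
           + of_nat (card {i\<in>I. D i = z}) * (h z :: 'c :: comm_semiring_1)"
    "(\<Prod>i\<in>I. p (D i)) = p x ^ card {i\<in>I. D i = x} * p y ^ card {i\<in>I. D i = y}
           * (p z :: 'd :: comm_monoid_mult) ^ card {i\<in>I. D i = z}"
    "card {i\<in>I. D i = x} + card {i\<in>I. D i = y} + card {i\<in>I. D i = z} = card I"
proof -
  let ?I0 = "{i\<in>I. D i = x}" and ?I1 = "{i\<in>I. D i = y}" and ?I2 = "{i\<in>I. D i = z}"
  have U: "I = ?I0 \<union> (?I1 \<union> ?I2)" using D by blast
  have d1: "?I0 \<inter> (?I1 \<union> ?I2) = {}" using xy xz by blast
  have d2: "?I1 \<inter> ?I2 = {}" using yz by blast
  have f0: "finite ?I0" "finite ?I1" "finite ?I2" using fin by auto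
  have "(\<Sum>i\<in>I. h (D i)) = (\<Sum>i\<in>?I0. h (D i)) + ((\<Sum>i\<in>?I1. h (D i)) + (\<Sum>i\<in>?I2. h (D i)))"
    apply (subst U) apply (subst sum.union_disjoint) using f0 d1 apply auto[3]
    apply (subst sum.union_disjoint) using f0 d2 by auto
  also have "\<dots> = of_nat (card ?I0) * h x + of_nat (card ?I1) * h y + of_nat (card ?I2) * h z"
    by (simp add: add.assoc)
  finally show "(\<Sum>i\<in>I. h (D i)) = of_nat (card ?I0) * h x + of_nat (card ?I1) * h y + of_nat (card ?I2) * h z" .
  have "(\<Prod>i\<in>I. p (D i)) = (\<Prod>i\<in>?I0. p (D i)) * ((\<Prod>i\<in>?I1. p (D i)) * (\<Prod>i\<in>?I2. p (D i)))"
    apply (subst U) apply (subst prod.union_disjoint) using f0 d1 apply auto[3]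
    apply (subst prod.union_disjoint) using f0 d2 by auto
  also have "\<dots> = p x ^ card ?I0 * p y ^ card ?I1 * p z ^ card ?I2"
    by (simp add: mult.assoc)
  finally show "(\<Prod>i\<in>I. p (D i)) = p x ^ card ?I0 * p y ^ card ?I1 * p z ^ card ?I2" .
  have "card I = card ?I0 + (card ?I1 + card ?I2)"
    apply (subst U) apply (subst card_Un_disjoint) using f0 d1 apply auto[3]
    apply (subst card_Un_disjoint) using f0 d2 by auto
  then show "card ?I0 + card ?I1 + card ?I2 = card I" by simp
qed

lemma map_poly_of_real_inj:
  assumes "map_poly complex_of_real p = map_poly complex_of_real q"
  shows "p = q"
proof (rule poly_eqI)
  fix i
  have "coeff (map_poly complex_of_real p) i = coeff (map_poly complex_of_real q) i" using assms by simp
  then show "coeff p i = coeff q i" by (simp add: of_real_hom.coeff_map_poly_hom)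
qed

lemma map_poly_of_real_prod3:
  "map_poly complex_of_real ([:- x, 1:] ^ m0 * [:- y, 1:] ^ m1 * [:- z, 1:] ^ m2)
   = [:- of_real x, 1:] ^ m0 * [:- of_real y, 1:] ^ m1 * [:- of_real z, 1:] ^ m2"
proof -
  interpret R: map_poly_comm_ring_hom "of_real :: real \<Rightarrow> complex" ..
  show ?thesis by (simp add: R.hom_mult R.hom_power of_real_hom.map_poly_pCons_hom)
qed

lemma order_prod3:
  fixes x y z :: "'a :: idom"
  assumes "y \<noteq> x" "y \<noteq> z"
  shows "order y ([:- x, 1:] ^ m0 * [:- y, 1:] ^ m1 * [:- z, 1:] ^ m2) = m1"
proof -
  have nz: "\<And>w :: 'a. \<And>m. [:- w, 1:] ^ m \<noteq> 0" by simp
  have "order y ([:- x, 1:] ^ m0 * [:- y, 1:] ^ m1 * [:- z, 1:] ^ m2)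
     = order y ([:- x, 1:] ^ m0) + order y ([:- y, 1:] ^ m1) + order y ([:- z, 1:] ^ m2)"
    by (simp add: order_mult nz)
  also have "\<dots> = m1" using assms by (simp add: order_linear_power)
  finally show ?thesis .
qed

lemma arith_facts:
  fixes r a c K s :: real
  assumes hr: "r*r - (a-c)*r - (K-c) = 0" and hc: "c = r*(r+1)" and hs: "s = a - c - r"
  and ar: "a < r" and a0: "0 \<le> a"
  shows "K = r*r*r + 3*r*r + r - a*r" "K \<noteq> r" "r \<noteq> s" "K \<noteq> s" "r*r - a*r - K \<noteq> 0" "c > 0" "K > 0"
proof -
  show K: "K = r*r*r + 3*r*r + r - a*r" using hr hc by (simp add: algebra_simps)
  have r0: "r > 0" using ar a0 by simp
  have "K - r = r*(r*r + 3*r - a)" using K by (simp add: algebra_simps)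
  moreover have "r*r + 3*r - a > 0" using r0 ar by (smt (verit) mult_pos_pos)
  ultimately have "K - r > 0" using r0 by simp
  then show "K \<noteq> r" by simp
  show "c > 0" using hc r0 by simp
  then show "r \<noteq> s" using hs ar r0 by linarith
  have "K > 0" using \<open>K - r > 0\<close> r0 by simp
  then show "K > 0" .
  have "s < 0" using hs ar \<open>c > 0\<close> by simp
  then show "K \<noteq> s" using \<open>K > 0\<close> by simp
  have "r*r - a*r - K = - c*(r+1)" using K hc by (simp add: algebra_simps)
  then show "r*r - a*r - K \<noteq> 0" using \<open>c > 0\<close> r0 by simp
qed

lemma mult_arith:
  fixes r a c K n m0 f g s :: real
  assumes hr: "r*r - (a-c)*r - (K-c) = 0" and hc: "c = r*(r+1)" and hs: "s = a - c - r"
  and ar: "a < r" and a0: "0 \<le> a"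
  and h1: "m0 + f + g = n" and h2: "m0*K + f*r + g*s = 0" and h3: "m0*K*K + f*r*r + g*s*s = n*K"
  and h4: "K*K = (a-c)*K + (K-c) + c*n"
  shows "f = n - K - 1"
proof -
  note F = arith_facts[OF hr hc hs ar a0]
  have e1: "f*(r-K)*(r-s) = (m0*K*K + f*r*r + g*s*s) - (K+s)*(m0*K + f*r + g*s) + K*s*(m0+f+g)"
    by (simp add: algebra_simps)
  then have e1': "f*(r-K)*(r-s) = n*K*(1+s)" using e1[unfolded h1 h2 h3] by (simp add: algebra_simps)
  have cn: "c*n = K*K - (a-c)*K - (K-c)" using h4 by simp
  have "c * ((n-K-1)*(r-K)*(r-s) - n*K*(1+s)) = (c*n - c*(K+1))*(r-K)*(r-s) - (c*n)*K*(1+s)"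
    by (simp add: algebra_simps)
  also have "\<dots> = ((K*K - (a-c)*K - (K-c)) - c*(K+1))*(r-K)*(r-s) - (K*K - (a-c)*K - (K-c))*K*(1+s)"
    unfolding cn ..
  also have "\<dots> = 0" unfolding hs unfolding F(1) hc by (simp add: algebra_simps)
  finally have "(n-K-1)*(r-K)*(r-s) = n*K*(1+s)" using F(6) by simp
  with e1' have "f*((r-K)*(r-s)) = (n-K-1)*((r-K)*(r-s))" by (simp add: algebra_simps)
  moreover have "(r-K)*(r-s) \<noteq> 0" using F(2,3) by simp
  ultimately show ?thesis by simp
qed

theorem theorem6p1:
  fixes V :: "'v set" and E :: "'v \<Rightarrow> 'v \<Rightarrow> bool"
    and n k a c :: nat and e :: int
  assumes srg: "strongly_regular V E n k a c"
    and conn: "graph_connected V E"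
    and nonbip: "\<not> bipartite V E"
    and k3: "k \<ge> 3" and kc: "k > c" and c1: "c \<ge> 1"
    and e_root: "real_of_int e = ((real a - real c)
                   + sqrt ((real a - real c)\<^sup>2 + 4 * (real k - real c))) / 2"
    and e_eig: "eigenvalue (adj_mat E V) (real_of_int e)"
    and c_eq: "int c = e * (e + 1)"
    and e_gt: "e > int a"
  shows "\<forall>v\<in>V. star_complement V E (real_of_int e) (insert v (nbrs E v))"
proof
  fix v assume v: "v \<in> V"
  note F = srg_facts[OF srg]
  define A where "A = adj_mat E V"
  note M = srg_matrix[OF srg, folded A_def]
  define r where "r = real_of_int e"
  define s where "s = real a - real c - r"
  have "real c = real_of_int (int c)" by simp
  also have "\<dots> = r * (r + 1)" unfolding c_eq r_def by simp
  finally have cr: "real c = r * (r + 1)" .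
  have ar: "real a < r" unfolding r_def using e_gt by linarith
  have a0: "0 \<le> real a" by simp
  have hr: "r*r - (real a - real c)*r - (real k - real c) = 0"
  proof -
    define D where "D = (real a - real c)\<^sup>2 + 4 * (real k - real c)"
    have D0: "D \<ge> 0" unfolding D_def using kc by simp
    have "sqrt D = 2*r - (real a - real c)" using e_root unfolding r_def D_def by simp
    then have "(2*r - (real a - real c))\<^sup>2 = D" using D0 by (metis real_sqrt_pow2)
    then show ?thesis unfolding D_def by (simp add: power2_eq_square algebra_simps)
  qed
  note AF = arith_facts[OF hr cr s_def ar a0]
  have k0: "k > 0" using k3 by simp
  have noteig: "\<not> eigenvalue (adj_mat E (insert v (nbrs E v))) r"
    by (rule nbhd_not_eig[OF srg v ar AF(5) k0])
  define AC where "AC = map_mat complex_of_real A"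
  have ACc: "AC \<in> carrier_mat n n" unfolding AC_def using M(1) by simp
  have ACe: "\<And>i j. i < n \<Longrightarrow> j < n \<Longrightarrow> AC $$ (i,j) = of_real (A $$ (i,j))"
    unfolding AC_def using M(1) by auto
  obtain D where D1: "mtr AC = (\<Sum>i = 0..<n. D i)" and D2: "mtr (AC * AC) = (\<Sum>i = 0..<n. D i * D i)"
    and Dc: "char_poly AC = (\<Prod>i = 0..<n. [:- D i, 1:])"
    using triang_facts[OF ACc] by blast
  have hsum: "complex_of_real r + complex_of_real s = complex_of_real (real a - real c)"
    unfolding s_def by simp
  have "r * s = - (real k - real c)" using hr unfolding s_def by (simp add: algebra_simps)
  then have hprod: "complex_of_real r * complex_of_real s = - complex_of_real (real k - real c)"
    by (metis of_real_mult of_real_minus)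
  have Droot: "D i = of_real (real k) \<or> D i = of_real r \<or> D i = of_real s" if i: "i < n" for i
  proof -
    have "poly (char_poly AC) (D i) = 0" unfolding Dc poly_prod using i
      by (intro prod_zero[of "{0..<n}"]) auto
    then have "eigenvalue AC (D i)" using eigenvalue_root_char_poly[OF ACc] by simp
    from eig_roots[OF M(1) M(4) M(5) this[unfolded AC_def]]
    have "D i = of_real (real k) \<or> D i * D i - of_real (real a - real c) * D i - of_real (real k - real c) = 0" .
    moreover have "D i * D i - of_real (real a - real c) * D i - of_real (real k - real c)
        = (D i - of_real r) * (D i - of_real s)"
      unfolding hsum[symmetric] by (simp add: algebra_simps hprod)
    ultimately show ?thesis by auto
  qed
  define K' where "K' = complex_of_real (real k)"
  define r' where "r' = complex_of_real r"
  define s' where "s' = complex_of_real s"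
  have dist: "K' \<noteq> r'" "K' \<noteq> s'" "r' \<noteq> s'" unfolding K'_def r'_def s'_def using AF(2,3,4) by (auto simp only: of_real_eq_iff)
  have Dr: "\<And>i. i \<in> {0..<n} \<Longrightarrow> D i = K' \<or> D i = r' \<or> D i = s'"
    using Droot unfolding K'_def r'_def s'_def by auto
  define m0 where "m0 = card {i\<in>{0..<n}. D i = K'}"
  define f where "f = card {i\<in>{0..<n}. D i = r'}"
  define g where "g = card {i\<in>{0..<n}. D i = s'}"
  note C = count3[of "{0..<n}" D, OF finite_atLeastLessThan Dr dist(1) dist(2) dist(3), folded m0_def f_def g_def]
  have h1: "m0 + f + g = n" using C(3) by simp
  have T1: "mtr AC = 0"
    unfolding mtr_def using ACc ACe M(2) by simp
  have T2: "mtr (AC * AC) = of_real (real n * real k)"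
  proof -
    have "mtr (AC * AC) = (\<Sum>i = 0..<n. \<Sum>l = 0..<n. AC $$ (i,l) * AC $$ (l,i))"
      unfolding mtr_def using ACc by (simp add: scalar_prod_def)
    also have "\<dots> = (\<Sum>i = 0..<n. of_real (\<Sum>l = 0..<n. A $$ (i,l) * A $$ (l,i)))"
      using ACe by simp
    also have "\<dots> = (\<Sum>i = 0..<n. of_real (real k))"
      using M(5) M(2) by (intro sum.cong refl) simp
    finally show ?thesis by simp
  qed
  have E1: "real m0 * real k + real f * r + real g * s = 0"
  proof -
    have "complex_of_real (real m0 * real k + real f * r + real g * s) = of_nat m0 * K' + of_nat f * r' + of_nat g * s'"
      unfolding K'_def r'_def s'_def by simp
    also have "\<dots> = (\<Sum>i\<in>{0..<n}. D i)" using C(1)[of "\<lambda>x. x"] by simp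
    also have "\<dots> = 0" using D1 T1 by simp
    finally show ?thesis by (simp only: of_real_eq_0_iff)
  qed
  have E2: "real m0 * real k * real k + real f * r * r + real g * s * s = real n * real k"
  proof -
    have "complex_of_real (real m0 * real k * real k + real f * r * r + real g * s * s)
        = of_nat m0 * (K' * K') + of_nat f * (r' * r') + of_nat g * (s' * s')"
      unfolding K'_def r'_def s'_def by simp
    also have "\<dots> = (\<Sum>i\<in>{0..<n}. D i * D i)" using C(1)[of "\<lambda>x. x * x"] by simp
    also have "\<dots> = of_real (real n * real k)" using D2 T2 by simp
    finally show ?thesis by (simp only: of_real_eq_iff)
  qed
  have h4: "real k * real k = (real a - real c) * real k + (real k - real c) + real c * real n"
  proof -
    let ?S = "\<Sum>i = 0..<n. \<Sum>j = 0..<n. \<Sum>l = 0..<n. A $$ (i,l) * A $$ (l,j)"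
    have "?S = (\<Sum>i = 0..<n. \<Sum>l = 0..<n. \<Sum>j = 0..<n. A $$ (i,l) * A $$ (l,j))"
    proof (rule sum.cong[OF refl])
      fix i show "(\<Sum>j = 0..<n. \<Sum>l = 0..<n. A $$ (i,l) * A $$ (l,j)) = (\<Sum>l = 0..<n. \<Sum>j = 0..<n. A $$ (i,l) * A $$ (l,j))"
        by (rule sum.swap)
    qed
    also have "\<dots> = (\<Sum>l = 0..<n. \<Sum>i = 0..<n. \<Sum>j = 0..<n. A $$ (i,l) * A $$ (l,j))"
      by (rule sum.swap)
    also have "\<dots> = (\<Sum>l = 0..<n. (\<Sum>i = 0..<n. A $$ (i,l)) * (\<Sum>j = 0..<n. A $$ (l,j)))"
      by (simp add: sum_product)
    also have "\<dots> = (\<Sum>l = 0..<n. real k * real k)" using M(3) M(4) by simp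
    finally have S1: "?S = real n * (real k * real k)" by simp
    have "?S = (\<Sum>i = 0..<n. \<Sum>j = 0..<n. (real a - real c) * A $$ (i,j) + (if i = j then real k - real c else 0) + real c)"
      using M(5) by simp
    also have "\<dots> = (\<Sum>i = 0..<n. (real a - real c) * real k + (real k - real c) + real n * real c)"
      using M(3) by (simp add: sum.distrib sum_distrib_left[symmetric])
    finally have S2: "?S = real n * ((real a - real c) * real k + (real k - real c) + real n * real c)" by simp
    have n0: "real n > 0" using v F(1) F(2) card_gt_0_iff by fastforce
    from S1 S2 have "real n * (real k * real k) = real n * ((real a - real c) * real k + (real k - real c) + real n * real c)"
      by linarith
    then have "real k * real k = (real a - real c) * real k + (real k - real c) + real n * real c"
      using n0 by (metis less_irrefl mult_left_cancel)
    then show ?thesis by (simp add: algebra_simps)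
  qed
  have fr: "real f = real n - real k - 1"
    by (rule mult_arith[OF hr cr s_def ar a0 _ E1 E2 h4]) (use h1 in simp)
  then have nf: "n = f + k + 1" by linarith
  have "map_poly complex_of_real (char_poly A) = char_poly AC"
    unfolding AC_def by (rule of_real_hom.char_poly_hom[symmetric, OF M(1)])
  also have "\<dots> = [:- K', 1:] ^ m0 * [:- r', 1:] ^ f * [:- s', 1:] ^ g"
    unfolding Dc using C(2)[of "\<lambda>d. [:- d, 1:]"] by simp
  also have "\<dots> = map_poly complex_of_real ([:- real k, 1:] ^ m0 * [:- r, 1:] ^ f * [:- s, 1:] ^ g)"
    unfolding K'_def r'_def s'_def by (rule map_poly_of_real_prod3[symmetric])
  finally have cpA: "char_poly A = [:- real k, 1:] ^ m0 * [:- r, 1:] ^ f * [:- s, 1:] ^ g"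
    by (rule map_poly_of_real_inj)
  have em: "eig_mult (adj_mat E V) r = f"
    unfolding eig_mult_def A_def[symmetric] cpA using AF(2,3) by (intro order_prod3) auto
  have vN: "v \<notin> nbrs E v" unfolding nbrs_def using F(6) by simp
  have finN: "finite (nbrs E v)" using nbrs_sub[OF srg] F(1) finite_subset by blast
  have cardS: "card (insert v (nbrs E v)) = k + 1" using vN finN F(7)[OF v] by simp
  show "star_complement V E (real_of_int e) (insert v (nbrs E v))"
    unfolding star_complement_def r_def[symmetric] em
    using cardS F(2) nf noteig nbrs_sub[OF srg] v by auto
qed

end
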